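(* Let $\mathfrak d=\mathfrak n^-\oplus\mathfrak k\oplus\mathfrak h\oplus\mathfrak n^+$ be the Lie algebra described in the context. Define a bilinear form $(\cdot|\cdot)_{\mathfrak d}$ on $\mathfrak d$ by: for $h,h',h_\lambda\in\mathfrak h$, $x,x'\in\mathfrak n^+\oplus\mathfrak n^-$, $k,k',k_\mu\in\mathfrak k$, $(h|h')_{\mathfrak d}=2(h|h')$, $(h|x)_{\mathfrak d}=(x|h)_{\mathfrak d}=0$, $(x|x')_{\mathfrak d}=(x|x')$, $(h_\lambda|k_\mu)_{\mathfrak d}=-2u(\lambda,\mu)$, $(k_\mu|h_\lambda)_{\mathfrak d}=2u(\mu,\lambda)$, $(k|x)_{\mathfrak d}=(x|k)_{\mathfrak d}=0$, $(k|k')_{\mathfrak d}=2(\varphi^{-1}(k)|\varphi^{-1}(k'))$, where $(\cdot|\cdot)$ is the invariant form on $\mathfrak g$. Then $(\cdot|\cdot)_{\mathfrak d}$ is a symmetric bilinear form on $\mathfrak d$ which is $\mathfrak d$-invariant, i.e. $([a,b]|c)_{\mathfrak d}=(a|[b,c])_{\mathfrak d}$ for all $a,b,c\in\mathfrak d$.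
   Context: Let $C=(a_{ij})_{n\times n}$ be an indecomposable symmetrizable generalized Cartan matrix of finite type, and $D=\mathrm{diag}(d_1,\dots,d_n)$ with positive integers $d_i$ such that $DC$ is symmetric positive definite. Let $\mathfrak g$ be the finite dimensional simple complex Lie algebra (bracket $[\cdot,\cdot]_{\mathfrak g}$) associated to $C$, $\mathfrak h$ a Cartan subalgebra with simple roots $\alpha_1,\dots,\alpha_n$, and $h_i\in\mathfrak h$ with $\alpha_j(h_i)=a_{ij}$; $\mathfrak g$ is generated by $h_i,x_{\pm\alpha_i}$ with $[h_i,x_{\pm\alpha_j}]_{\mathfrak g}=\pm a_{ij}x_{\pm\alpha_j}$, $[x_{\alpha_i},x_{-\alpha_j}]_{\mathfrak g}=\delta_{ij}h_i$ and the Serre relations. Let $\mathfrak n^+$ (resp. $\mathfrak n^-$) be the span of root vectors with positive (resp. negative) roots, $\mathfrak n=\mathfrak n^-\oplus\mathfrak n^+$; $x_\alpha$ always denotes a root vector of root $\alpha$. Let $(\cdot|\cdot)$ be the symmetric bilinear form on $\mathfrak h^*$ with $(\alpha_i|\alpha_j)=d_ia_{ij}$; for $\lambda\in\mathfrak h^*$ let $h_\lambda\in\mathfrak h$ be defined by $\alpha_i(h_\lambda)=(\alpha_i|\lambda)$ for all $i$. This gives a form on $\mathfrak h$, $(h_\lambda|h_\mu)=(\lambda|\mu)=\lambda(h_\mu)$, extended to the nondegenerate $\mathfrak g$-invariant symmetric form $(\cdot|\cdot)$ on $\mathfrak g$ with $(h_i|h_j)=d_j^{-1}a_{ij}$, $(h|x_\alpha)=0$,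 $(x_\alpha|x_\beta)=0$ if $\alpha+\beta\neq0$, $(x_{\alpha_i}|x_{-\alpha_j})=d_i^{-1}\delta_{ij}$. Let $u=(u_{ij})$ be a skew symmetric complex $n\times n$ matrix, giving $u(\lambda,\mu)=\sum_{i,j}u_{ij}\lambda(h_i)\mu(h_j)$ on $\mathfrak h^*$; let $\Phi:\mathfrak h^*\to\mathfrak h^*$ be the linear map with $u(\lambda,\mu)=(\Phi\lambda|\mu)$, and $\Phi_\pm=\Phi\pm I$. Let $\mathfrak k$ be a vector space with a linear isomorphism $\varphi:\mathfrak h\to\mathfrak k$, and $k_\lambda=\varphi(h_\lambda)$. Let $\mathfrak g'=\mathfrak n^-\oplus\mathfrak k\oplus\mathfrak n^+$ be the Lie algebra (isomorphic to $\mathfrak g$) with bracket $[k_\lambda,k_\mu]_{\mathfrak g'}=0$, $[k_\lambda,x_\alpha]_{\mathfrak g'}=(\alpha|\lambda)x_\alpha$, $[x_\alpha,x_\beta]_{\mathfrak g'}=[x_\alpha,x_\beta]_{\mathfrak g}$ for $\alpha\neq-\beta$, $[x_\alpha,x_{-\alpha}]_{\mathfrak g'}=\varphi([x_\alpha,x_{-\alpha}]_{\mathfrak g})$. Then $\mathfrak d=\mathfrak n^-\oplus\mathfrak k\oplus\mathfrak h\oplus\mathfrak n^+$ is the Lie algebra with bracket: $[h_\lambda,h_\mu]=[h_\lambda,k_\mu]=[k_\lambda,k_\mu]=0$, $[h_\lambda,x_\alpha]=-(\Phi_-\lambda|\alpha)x_\alpha$, $[k_\lambda,x_\alpha]=(\Phi_+\lambda|\alpha)x_\alpha$,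 $[x_\alpha,x_\beta]=\tfrac12([x_\alpha,x_\beta]_{\mathfrak g}+[x_\alpha,x_\beta]_{\mathfrak g'})$ for all $\lambda,\mu\in\mathfrak h^*$ and root vectors $x_\alpha,x_\beta\in\mathfrak n$. *)

theory Defs
  imports "HOL-Analysis.Analysis"
begin

text \<open>Indices run over 0..n-1. A is the generalized Cartan matrix C, d the symmetrizer D.\<close>

definition indecomposable :: "nat \<Rightarrow> (nat \<Rightarrow> nat \<Rightarrow> int) \<Rightarrow> bool" where
  "indecomposable n A \<longleftrightarrow> 0 < n \<and>
     \<not> (\<exists>I. I \<subseteq> {..<n} \<and> I \<noteq> {} \<and> I \<noteq> {..<n} \<and> (\<forall>i\<in>I. \<forall>j\<in>{..<n} - I. A i j = 0))"

definition gcm :: "nat \<Rightarrow> (nat \<Rightarrow> nat \<Rightarrow> int) \<Rightarrow> bool" where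
  "gcm n A \<longleftrightarrow> (\<forall>i<n. A i i = 2) \<and> (\<forall>i<n. \<forall>j<n. i \<noteq> j \<longrightarrow> A i j \<le> 0)
     \<and> (\<forall>i<n. \<forall>j<n. A i j = 0 \<longleftrightarrow> A j i = 0)"

text \<open>D = diag(d) with positive integer entries, DC symmetric positive definite
  (this makes C symmetrizable of finite type).\<close>
definition symmetrizer_pd :: "nat \<Rightarrow> (nat \<Rightarrow> nat \<Rightarrow> int) \<Rightarrow> (nat \<Rightarrow> nat) \<Rightarrow> bool" where
  "symmetrizer_pd n A d \<longleftrightarrow> (\<forall>i<n. 0 < d i)
     \<and> (\<forall>i<n. \<forall>j<n. int (d i) * A i j = int (d j) * A j i)
     \<and> (\<forall>v :: nat \<Rightarrow> real. (\<exists>i<n. v i \<noteq> 0) \<longrightarrow>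
          0 < (\<Sum>i<n. \<Sum>j<n. v i * real (d i) * real_of_int (A i j) * v j))"

definition lie_algebra :: "(complex \<Rightarrow> 'g \<Rightarrow> 'g::ab_group_add) \<Rightarrow> ('g \<Rightarrow> 'g \<Rightarrow> 'g) \<Rightarrow> bool" where
  "lie_algebra sc br \<longleftrightarrow> vector_space sc
     \<and> (\<forall>x y z. br (x + y) z = br x z + br y z \<and> br z (x + y) = br z x + br z y)
     \<and> (\<forall>c x z. br (sc c x) z = sc c (br x z) \<and> br z (sc c x) = sc c (br z x))
     \<and> (\<forall>x. br x x = 0)
     \<and> (\<forall>x y z. br x (br y z) + br y (br z x) + br z (br x y) = 0)"

definition lie_generated :: "(complex \<Rightarrow> 'g \<Rightarrow> 'g::ab_group_add) \<Rightarrow> ('g \<Rightarrow> 'g \<Rightarrow> 'g) \<Rightarrow> 'g set \<Rightarrow> 'g set" where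
  "lie_generated sc br S =
     \<Inter>{V. module.subspace sc V \<and> S \<subseteq> V \<and> (\<forall>x\<in>V. \<forall>y\<in>V. br x y \<in> V)}"

text \<open>g is the finite dimensional simple Lie algebra associated to C: it is generated by
  h_i (hh i), x_{alpha_i} (ep i), x_{-alpha_i} (em i) subject to the Chevalley-Serre relations,
  with the h_i linearly independent (so g is the Serre algebra, not a proper quotient).\<close>
definition chevalley_serre ::
  "nat \<Rightarrow> (nat \<Rightarrow> nat \<Rightarrow> int) \<Rightarrow> (complex \<Rightarrow> 'g \<Rightarrow> 'g::ab_group_add) \<Rightarrow> ('g \<Rightarrow> 'g \<Rightarrow> 'g)
    \<Rightarrow> (nat \<Rightarrow> 'g) \<Rightarrow> (nat \<Rightarrow> 'g) \<Rightarrow> (nat \<Rightarrow> 'g) \<Rightarrow> bool" where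
  "chevalley_serre n A sc br hh ep em \<longleftrightarrow>
     (\<forall>i<n. \<forall>j<n. br (hh i) (hh j) = 0
        \<and> br (hh i) (ep j) = sc (of_int (A i j)) (ep j)
        \<and> br (hh i) (em j) = sc (- of_int (A i j)) (em j)
        \<and> br (ep i) (em j) = (if i = j then hh i else 0)
        \<and> (i \<noteq> j \<longrightarrow> (br (ep i) ^^ nat (1 - A i j)) (ep j) = 0
                   \<and> (br (em i) ^^ nat (1 - A i j)) (em j) = 0))
     \<and> lie_generated sc br (hh ` {..<n} \<union> ep ` {..<n} \<union> em ` {..<n}) = UNIV
     \<and> inj_on hh {..<n} \<and> \<not> module.dependent sc (hh ` {..<n})"

definition cartan :: "nat \<Rightarrow> (complex \<Rightarrow> 'g \<Rightarrow> 'g::ab_group_add) \<Rightarrow> (nat \<Rightarrow> 'g) \<Rightarrow> 'g set" where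
  "cartan n sc hh = module.span sc (hh ` {..<n})"

text \<open>A root alpha is given as a function on g, only its values on the Cartan subalgebra matter.\<close>
definition rootspace ::
  "nat \<Rightarrow> (complex \<Rightarrow> 'g \<Rightarrow> 'g::ab_group_add) \<Rightarrow> ('g \<Rightarrow> 'g \<Rightarrow> 'g) \<Rightarrow> (nat \<Rightarrow> 'g) \<Rightarrow> ('g \<Rightarrow> complex) \<Rightarrow> 'g set" where
  "rootspace n sc br hh \<alpha> = {x. \<forall>h\<in>cartan n sc hh. br h x = sc (\<alpha> h) x}"

definition is_root ::
  "nat \<Rightarrow> (complex \<Rightarrow> 'g \<Rightarrow> 'g::ab_group_add) \<Rightarrow> ('g \<Rightarrow> 'g \<Rightarrow> 'g) \<Rightarrow> (nat \<Rightarrow> 'g) \<Rightarrow> ('g \<Rightarrow> complex) \<Rightarrow> bool" where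
  "is_root n sc br hh \<alpha> \<longleftrightarrow> (\<exists>h\<in>cartan n sc hh. \<alpha> h \<noteq> 0) \<and> (\<exists>x\<in>rootspace n sc br hh \<alpha>. x \<noteq> 0)"

text \<open>n = n^- + n^+ : span of all root spaces.\<close>
definition nilp :: "nat \<Rightarrow> (complex \<Rightarrow> 'g \<Rightarrow> 'g::ab_group_add) \<Rightarrow> ('g \<Rightarrow> 'g \<Rightarrow> 'g) \<Rightarrow> (nat \<Rightarrow> 'g) \<Rightarrow> 'g set" where
  "nilp n sc br hh = module.span sc (\<Union>{rootspace n sc br hh \<alpha> | \<alpha>. is_root n sc br hh \<alpha>})"

definition invariant_form ::
  "nat \<Rightarrow> (nat \<Rightarrow> nat \<Rightarrow> int) \<Rightarrow> (nat \<Rightarrow> nat) \<Rightarrow> (complex \<Rightarrow> 'g \<Rightarrow> 'g::ab_group_add) \<Rightarrow> ('g \<Rightarrow> 'g \<Rightarrow> 'g)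
    \<Rightarrow> (nat \<Rightarrow> 'g) \<Rightarrow> (nat \<Rightarrow> 'g) \<Rightarrow> (nat \<Rightarrow> 'g) \<Rightarrow> ('g \<Rightarrow> 'g \<Rightarrow> complex) \<Rightarrow> bool" where
  "invariant_form n A d sc br hh ep em B \<longleftrightarrow>
     (\<forall>x y z. B (x + y) z = B x z + B y z) \<and> (\<forall>c x z. B (sc c x) z = c * B x z)
     \<and> (\<forall>x y. B x y = B y x)
     \<and> (\<forall>x y z. B (br x y) z = B x (br y z))
     \<and> (\<forall>x. (\<forall>y. B x y = 0) \<longrightarrow> x = 0)
     \<and> (\<forall>i<n. \<forall>j<n. B (hh i) (hh j) = of_int (A i j) / of_nat (d j))
     \<and> (\<forall>i<n. \<forall>j<n. B (ep i) (em j) = (if i = j then 1 / of_nat (d i) else 0))"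

text \<open>For H = h_lambda in the Cartan subalgebra, lambda(h_i) = (h_lambda | h_i) = B H (hh i).
  uu H H' = u(lambda,mu) for H = h_lambda, H' = h_mu.\<close>
definition uu :: "nat \<Rightarrow> (nat \<Rightarrow> nat \<Rightarrow> complex) \<Rightarrow> ('g \<Rightarrow> 'g \<Rightarrow> complex) \<Rightarrow> (nat \<Rightarrow> 'g) \<Rightarrow> 'g \<Rightarrow> 'g \<Rightarrow> complex" where
  "uu n u B hh H H' = (\<Sum>i<n. \<Sum>j<n. u i j * B H (hh i) * B H' (hh j))"

text \<open>PhiH n u sc B hh (h_lambda) = h_{Phi lambda}: the element of the Cartan subalgebra with
  (h_{Phi lambda} | h_mu) = u(lambda, mu) for all mu.\<close>
definition PhiH :: "nat \<Rightarrow> (nat \<Rightarrow> nat \<Rightarrow> complex) \<Rightarrow> (complex \<Rightarrow> 'g \<Rightarrow> 'g::ab_group_add)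
    \<Rightarrow> ('g \<Rightarrow> 'g \<Rightarrow> complex) \<Rightarrow> (nat \<Rightarrow> 'g) \<Rightarrow> 'g \<Rightarrow> 'g" where
  "PhiH n u sc B hh H = (\<Sum>i<n. \<Sum>j<n. sc (u i j * B H (hh i)) (hh j))"

text \<open>An element of d is represented as a pair (X, K) with X in g = n^- + h + n^+ and K in h,
  standing for X + phi(K); thus k_lambda = phi(h_lambda) is (0, h_lambda).\<close>

definition dset :: "nat \<Rightarrow> (complex \<Rightarrow> 'g \<Rightarrow> 'g::ab_group_add) \<Rightarrow> (nat \<Rightarrow> 'g) \<Rightarrow> ('g \<times> 'g) set" where
  "dset n sc hh = {p. snd p \<in> cartan n sc hh}"

definition scd :: "(complex \<Rightarrow> 'g \<Rightarrow> 'g) \<Rightarrow> complex \<Rightarrow> 'g \<times> 'g \<Rightarrow> 'g \<times> 'g" where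
  "scd sc c p = (sc c (fst p), sc c (snd p))"

definition bilinear_map_on ::
  "(complex \<Rightarrow> 'g \<Rightarrow> 'g::ab_group_add) \<Rightarrow> ('g \<times> 'g) set \<Rightarrow> ('g \<times> 'g \<Rightarrow> 'g \<times> 'g \<Rightarrow> 'g \<times> 'g) \<Rightarrow> bool" where
  "bilinear_map_on sc D f \<longleftrightarrow>
     (\<forall>a\<in>D. \<forall>b\<in>D. f a b \<in> D)
     \<and> (\<forall>a\<in>D. \<forall>b\<in>D. \<forall>b'\<in>D. f (b + b') a = f b a + f b' a \<and> f a (b + b') = f a b + f a b')
     \<and> (\<forall>a\<in>D. \<forall>b\<in>D. \<forall>c. f (scd sc c b) a = scd sc c (f b a) \<and> f a (scd sc c b) = scd sc c (f a b))"

definition bilinear_form_on ::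
  "(complex \<Rightarrow> 'g \<Rightarrow> 'g::ab_group_add) \<Rightarrow> ('g \<times> 'g) set \<Rightarrow> ('g \<times> 'g \<Rightarrow> 'g \<times> 'g \<Rightarrow> complex) \<Rightarrow> bool" where
  "bilinear_form_on sc D f \<longleftrightarrow>
     (\<forall>a\<in>D. \<forall>b\<in>D. \<forall>b'\<in>D. f (b + b') a = f b a + f b' a \<and> f a (b + b') = f a b + f a b')
     \<and> (\<forall>a\<in>D. \<forall>b\<in>D. \<forall>c. f (scd sc c b) a = c * f b a \<and> f a (scd sc c b) = c * f a b)"

end

theory Submission
  imports Defs
begin

locale S =
  fixes n :: nat and A :: "nat \<Rightarrow> nat \<Rightarrow> int" and d :: "nat \<Rightarrow> nat"
    and u :: "nat \<Rightarrow> nat \<Rightarrow> complex"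
    and sc :: "complex \<Rightarrow> 'g \<Rightarrow> 'g::ab_group_add" and br :: "'g \<Rightarrow> 'g \<Rightarrow> 'g"
    and hh ep em :: "nat \<Rightarrow> 'g" and B :: "'g \<Rightarrow> 'g \<Rightarrow> complex"
  assumes lie: "lie_algebra sc br"
    and B: "invariant_form n A d sc br hh ep em B"
    and cs: "chevalley_serre n A sc br hh ep em"
begin

sublocale vs: vector_space sc using lie unfolding lie_algebra_def by auto

lemma br_add_l: "br (x + y) z = br x z + br y z" and br_add_r: "br z (x + y) = br z x + br z y"
  and br_sc_l: "br (sc c x) z = sc c (br x z)" and br_sc_r: "br z (sc c x) = sc c (br z x)"
  and br_alt: "br x x = 0" and jacobi: "br x (br y w) + br y (br w x) + br w (br x y) = 0"
  using lie unfolding lie_algebra_def by auto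

lemma br_zero_l[simp]: "br 0 y = 0"
  using br_add_l[of 0 0 y] by simp
lemma br_zero_r[simp]: "br y 0 = 0"
  using br_add_r[of y 0 0] by simp
lemma br_anti: "br y x = - br x y"
proof -
  have "br (x+y) (x+y) = 0" by (rule br_alt)
  hence "br x x + br x y + (br y x + br y y) = 0" by (simp add: br_add_l br_add_r add_ac)
  hence "br y x + br x y = 0" by (simp add: br_alt add.commute)
  thus ?thesis by (simp add: eq_neg_iff_add_eq_0)
qed

lemma br_neg_r: "br x (- y) = - br x y"
  using br_add_r[of x y "-y"] by (simp add: eq_neg_iff_add_eq_0 add.commute)

lemma B_add_l: "B (x + y) z = B x z + B y z" and B_sc_l: "B (sc c x) z = c * B x z"
  and B_sym: "B x y = B y x" and B_inv: "B (br x y) z = B x (br y z)"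
  and B_hh: "\<forall>i<n. \<forall>j<n. B (hh i) (hh j) = of_int (A i j) / of_nat (d j)"
  using B unfolding invariant_form_def by auto

lemma B_add_r: "B z (x + y) = B z x + B z y" using B_add_l B_sym by metis
lemma B_sc_r: "B z (sc c x) = c * B z x" using B_sc_l B_sym by metis
lemma B_zero_l[simp]: "B 0 y = 0" using B_add_l[of 0 0 y] by simp
lemma B_zero_r[simp]: "B y 0 = 0" using B_add_r[of y 0 0] by simp
lemma B_neg_l: "B (- x) y = - B x y"
  using B_add_l[of x "-x" y] by (simp add: eq_neg_iff_add_eq_0 add.commute)
lemma B_sum_r: "B z (sum f I) = (\<Sum>i\<in>I. B z (f i))"
  by (induction I rule: infinite_finite_induct) (auto simp: B_add_r)

abbreviation "Hc \<equiv> cartan n sc hh"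
abbreviation "rs \<equiv> rootspace n sc br hh"
abbreviation "NN \<equiv> nilp n sc br hh"

lemma Hc_sub: "vs.subspace Hc" unfolding cartan_def by simp
lemma hh_in: "i < n \<Longrightarrow> hh i \<in> Hc" unfolding cartan_def by (auto intro: vs.span_base)
lemma Hc_add: "x \<in> Hc \<Longrightarrow> y \<in> Hc \<Longrightarrow> x + y \<in> Hc" unfolding cartan_def by (rule vs.span_add)
lemma Hc_sc: "x \<in> Hc \<Longrightarrow> sc c x \<in> Hc" unfolding cartan_def by (rule vs.span_scale)
lemma Hc_0: "0 \<in> Hc" unfolding cartan_def by (rule vs.span_zero)

lemma br_span:
  assumes V: "vs.subspace V" and XY: "\<And>x y. x \<in> X \<Longrightarrow> y \<in> Y \<Longrightarrow> br x y \<in> V"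
    and x: "x \<in> vs.span X" and y: "y \<in> vs.span Y"
  shows "br x y \<in> V"
  using x
proof (induction rule: vs.span_induct_alt)
  case base then show ?case using V by (simp add: vs.subspace_0)
next
  case (step c x1 x2)
  have "br x1 y \<in> V" using y
  proof (induction rule: vs.span_induct_alt)
    case base then show ?case using V by (simp add: vs.subspace_0)
  next
    case (step c' y1 y2)
    then show ?case using V XY[of x1 y1] \<open>x1 \<in> X\<close>
      by (simp add: br_add_r br_sc_r vs.subspace_add vs.subspace_scale)
  qed
  then show ?case using step V by (simp add: br_add_l br_sc_l vs.subspace_add vs.subspace_scale)
qed

lemma rs_sc: "x \<in> rs \<alpha> \<Longrightarrow> sc c x \<in> rs \<alpha>"
  unfolding rootspace_def by (auto simp: br_sc_r vs.scale_left_commute)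
lemma rs_0: "0 \<in> rs \<alpha>"
  unfolding rootspace_def by auto

lemma rs_br:
  assumes x: "x \<in> rs \<alpha>" and y: "y \<in> rs \<beta>"
  shows "br x y \<in> rs (\<lambda>h. \<alpha> h + \<beta> h)"
  unfolding rootspace_def
proof safe
  fix h assume h: "h \<in> Hc"
  have hx: "br h x = sc (\<alpha> h) x" and hy: "br h y = sc (\<beta> h) y"
    using x y h unfolding rootspace_def by auto
  have "br h (br x y) + br x (br y h) + br y (br h x) = 0" by (rule jacobi)
  moreover have "br x (br y h) = - sc (\<beta> h) (br x y)"
    using hy br_anti[of y h] by (simp add: br_sc_r br_neg_r)
  moreover have "br y (br h x) = - sc (\<alpha> h) (br x y)"
    using hx br_anti[of x y] by (simp add: br_sc_r)
  ultimately have "br h (br x y) = sc (\<beta> h) (br x y) + sc (\<alpha> h) (br x y)"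
    by (simp add: eq_neg_iff_add_eq_0 algebra_simps)
  thus "br h (br x y) = sc (\<alpha> h + \<beta> h) (br x y)"
    by (simp add: vs.scale_left_distrib add.commute)
qed

lemma rs_nilp:
  assumes x: "x \<in> rs \<alpha>" and h: "h \<in> Hc" "\<alpha> h \<noteq> 0"
  shows "x \<in> NN"
proof (cases "x = 0")
  case True then show ?thesis unfolding nilp_def by (simp add: vs.span_zero)
next
  case False
  hence "is_root n sc br hh \<alpha>" using x h unfolding is_root_def by auto
  then show ?thesis using x unfolding nilp_def by (auto intro!: vs.span_base)
qed

lemma br_HH: "h \<in> Hc \<Longrightarrow> h' \<in> Hc \<Longrightarrow> br h h' = 0"
  using br_span[of "{0}" "hh ` {..<n}" "hh ` {..<n}" h h'] cs
  unfolding cartan_def chevalley_serre_def by auto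

lemma B_rr:
  assumes x: "x \<in> rs \<alpha>" and y: "y \<in> rs \<beta>" and h: "h \<in> Hc" "\<alpha> h + \<beta> h \<noteq> 0"
  shows "B x y = 0"
proof -
  have hx: "br h x = sc (\<alpha> h) x" and hy: "br h y = sc (\<beta> h) y"
    using x y h unfolding rootspace_def by auto
  have "\<alpha> h * B x y = B (br h x) y" using hx by (simp add: B_sc_l)
  also have "\<dots> = - B (br x h) y" using br_anti[of h x] B_neg_l by simp
  also have "\<dots> = - (\<beta> h * B x y)" using hy by (simp add: B_inv B_sc_r)
  finally have "(\<alpha> h + \<beta> h) * B x y = 0" by (simp add: algebra_simps)
  thus ?thesis using h by simp
qed

lemma B_hr:
  assumes h: "h \<in> Hc" and w: "w \<in> rs \<gamma>" and h': "h' \<in> Hc" "\<gamma> h' \<noteq> 0"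
  shows "B h w = 0"
proof -
  have "br h' w = sc (\<gamma> h') w" using w h' unfolding rootspace_def by auto
  hence "\<gamma> h' * B h w = B h (br h' w)" by (simp add: B_sc_r)
  also have "\<dots> = 0" using br_HH[OF h h'(1)] by (simp flip: B_inv)
  finally show ?thesis using h' by simp
qed

end

locale S2 = S +
  fixes brd and Bd
  assumes gcm: "gcm n A" and symm: "symmetrizer_pd n A d"
    and u_skew: "\<forall>i<n. \<forall>j<n. u i j = - u j i"
    and brd_bil: "bilinear_map_on sc (dset n sc hh) brd"
    and brd_alt: "\<forall>a\<in>dset n sc hh. brd a a = 0"
    and brd_hh: "\<forall>H\<in>cartan n sc hh. \<forall>H'\<in>cartan n sc hh. brd (H, 0) (H', 0) = 0"
    and brd_hk: "\<forall>H\<in>cartan n sc hh. \<forall>H'\<in>cartan n sc hh. brd (H, 0) (0, H') = 0"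
    and brd_kk: "\<forall>H\<in>cartan n sc hh. \<forall>H'\<in>cartan n sc hh. brd (0, H) (0, H') = 0"
    and brd_hx: "\<forall>H\<in>cartan n sc hh. \<forall>\<alpha> x. is_root n sc br hh \<alpha> \<and> x \<in> rootspace n sc br hh \<alpha> \<longrightarrow>
        brd (H, 0) (x, 0) = (sc (- (\<alpha> (PhiH n u sc B hh H) - \<alpha> H)) x, 0)"
    and brd_kx: "\<forall>H\<in>cartan n sc hh. \<forall>\<alpha> x. is_root n sc br hh \<alpha> \<and> x \<in> rootspace n sc br hh \<alpha> \<longrightarrow>
        brd (0, H) (x, 0) = (sc (\<alpha> (PhiH n u sc B hh H) + \<alpha> H) x, 0)"
    and brd_xx: "\<forall>\<alpha> \<beta> x y. is_root n sc br hh \<alpha> \<and> x \<in> rootspace n sc br hh \<alpha>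
        \<and> is_root n sc br hh \<beta> \<and> y \<in> rootspace n sc br hh \<beta> \<longrightarrow>
        brd (x, 0) (y, 0) = scd sc (1/2) ((br x y, 0) +
          (if (\<forall>h\<in>cartan n sc hh. \<alpha> h + \<beta> h = 0) then (0, br x y) else (br x y, 0)))"
    and Bd_bil: "bilinear_form_on sc (dset n sc hh) Bd"
    and Bd_hh: "\<forall>H\<in>cartan n sc hh. \<forall>H'\<in>cartan n sc hh. Bd (H, 0) (H', 0) = 2 * B H H'"
    and Bd_hx: "\<forall>H\<in>cartan n sc hh. \<forall>x\<in>nilp n sc br hh. Bd (H, 0) (x, 0) = 0 \<and> Bd (x, 0) (H, 0) = 0"
    and Bd_xx: "\<forall>x\<in>nilp n sc br hh. \<forall>x'\<in>nilp n sc br hh. Bd (x, 0) (x', 0) = B x x'"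
    and Bd_hk: "\<forall>H\<in>cartan n sc hh. \<forall>H'\<in>cartan n sc hh. Bd (H, 0) (0, H') = - 2 * uu n u B hh H H'"
    and Bd_kh: "\<forall>H\<in>cartan n sc hh. \<forall>H'\<in>cartan n sc hh. Bd (0, H') (H, 0) = 2 * uu n u B hh H' H"
    and Bd_kx: "\<forall>K\<in>cartan n sc hh. \<forall>x\<in>nilp n sc br hh. Bd (0, K) (x, 0) = 0 \<and> Bd (x, 0) (0, K) = 0"
    and Bd_kk: "\<forall>K\<in>cartan n sc hh. \<forall>K'\<in>cartan n sc hh. Bd (0, K) (0, K') = 2 * B K K'"
begin

abbreviation "Ds \<equiv> dset n sc hh"
abbreviation "isr \<equiv> is_root n sc br hh"
definition "RR = \<Union>{rs \<alpha> | \<alpha>. isr \<alpha>}"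
definition "GG = Hc \<union> RR"

lemma rr_cartan:
  assumes "isr \<alpha>" "x \<in> rs \<alpha>" "isr \<beta>" "y \<in> rs \<beta>" "\<forall>h\<in>Hc. \<alpha> h + \<beta> h = 0"
  shows "br x y \<in> Hc"
proof -
  have x0: "(x, 0) \<in> Ds" "(y, 0) \<in> Ds" unfolding dset_def using Hc_0 by auto
  have "brd (x, 0) (y, 0) \<in> Ds" using brd_bil x0 unfolding bilinear_map_on_def by auto
  moreover have "brd (x, 0) (y, 0) = (sc (1/2) (br x y), sc (1/2) (br x y))"
    using brd_xx assms by (simp add: scd_def)
  ultimately have "sc (1/2) (br x y) \<in> Hc" unfolding dset_def by simp
  hence "sc 2 (sc (1/2) (br x y)) \<in> Hc" by (rule Hc_sc)
  thus ?thesis by simp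
qed

lemma rs_spanG:
  assumes x: "x \<in> rs \<alpha>" and h: "h \<in> Hc" "\<alpha> h \<noteq> 0"
  shows "x \<in> vs.span GG"
proof (cases "x = 0")
  case True then show ?thesis by (simp add: vs.span_zero)
next
  case False
  hence "isr \<alpha>" using x h unfolding is_root_def by auto
  then show ?thesis using x unfolding GG_def RR_def by (auto intro!: vs.span_base)
qed

lemma gen_rs:
  assumes e: "\<And>j. j < n \<Longrightarrow> br (hh j) e = sc (k * of_int (A j i)) e" and i: "i < n"
  shows "e \<in> rs (\<lambda>h. k * of_nat (d i) * B h (hh i))"
proof -
  have di: "d i > 0" using symm i unfolding symmetrizer_pd_def by auto
  let ?P = "{h. br h e = sc (k * of_nat (d i) * B h (hh i)) e}"
  have "vs.subspace ?P"
    by (rule vs.subspaceI) (auto simp: br_add_l br_sc_l B_add_l B_sc_l vs.scale_left_distrib algebra_simps)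
  moreover have "hh ` {..<n} \<subseteq> ?P"
    using e B_hh i di by auto
  ultimately have "Hc \<subseteq> ?P" unfolding cartan_def by (rule vs.span_minimal[rotated])
  thus ?thesis unfolding rootspace_def by auto
qed

lemma gen_root_val:
  assumes i: "i < n" and k: "k \<noteq> 0"
  shows "k * of_nat (d i) * B (hh i) (hh i) \<noteq> 0"
proof -
  have di: "d i > 0" using symm i unfolding symmetrizer_pd_def by auto
  have "A i i = 2" using gcm i unfolding gcm_def by auto
  then show ?thesis using B_hh i di k by auto
qed

lemma ep_span: "i < n \<Longrightarrow> ep i \<in> vs.span GG"
  apply (rule rs_spanG[OF gen_rs[where k=1] hh_in gen_root_val])
  using cs unfolding chevalley_serre_def by auto

lemma em_span: "i < n \<Longrightarrow> em i \<in> vs.span GG"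
  apply (rule rs_spanG[OF gen_rs[where k="-1"] hh_in gen_root_val])
  using cs unfolding chevalley_serre_def by auto

lemma GG_sc: "x \<in> GG \<Longrightarrow> sc c x \<in> GG"
  unfolding GG_def RR_def using Hc_sc rs_sc by blast

lemma br_GG:
  assumes x: "x \<in> GG" and y: "y \<in> GG"
  shows "br x y \<in> vs.span GG"
proof -
  have HR: "br h z \<in> vs.span GG" if h: "h \<in> Hc" and z: "z \<in> RR" for h z
  proof -
    obtain \<gamma> where g: "isr \<gamma>" "z \<in> rs \<gamma>" using z unfolding RR_def by auto
    have "br h z = sc (\<gamma> h) z" using g h unfolding rootspace_def by auto
    moreover have "sc (\<gamma> h) z \<in> GG" using GG_sc z unfolding GG_def by auto
    ultimately show ?thesis by (simp add: vs.span_base)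
  qed
  show ?thesis
  proof (cases "x \<in> Hc")
    case xH: True
    show ?thesis
    proof (cases "y \<in> Hc")
      case True then show ?thesis using br_HH xH by (simp add: vs.span_zero)
    next
      case False then show ?thesis using HR xH y unfolding GG_def by auto
    qed
  next
    case xN: False
    then have xR: "x \<in> RR" using x unfolding GG_def by auto
    show ?thesis
    proof (cases "y \<in> Hc")
      case True then show ?thesis using HR[of y x] xR br_anti[of x y] vs.span_neg by force
    next
      case False
      then have yR: "y \<in> RR" using y unfolding GG_def by auto
      obtain \<alpha> \<beta> where ab: "isr \<alpha>" "x \<in> rs \<alpha>" "isr \<beta>" "y \<in> rs \<beta>"
        using xR yR unfolding RR_def by auto
      show ?thesis
      proof (cases "\<forall>h\<in>Hc. \<alpha> h + \<beta> h = 0")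
        case True then show ?thesis using rr_cartan[OF ab] by (simp add: GG_def vs.span_base)
      next
        case False
        then obtain h where "h \<in> Hc" "\<alpha> h + \<beta> h \<noteq> 0" by auto
        then show ?thesis using rs_spanG[OF rs_br[OF ab(2) ab(4)]] by auto
      qed
    qed
  qed
qed

lemma spanGG: "vs.span GG = UNIV"
proof -
  have "lie_generated sc br (hh ` {..<n} \<union> ep ` {..<n} \<union> em ` {..<n}) \<subseteq> vs.span GG"
    unfolding lie_generated_def
  proof (rule Inter_lower, safe)
    fix i assume "i < n" then show "hh i \<in> vs.span GG"
      using hh_in by (auto simp: GG_def intro: vs.span_base)
  next
    fix i assume "i < n" then show "ep i \<in> vs.span GG" by (rule ep_span)
  next
    fix i assume "i < n" then show "em i \<in> vs.span GG" by (rule em_span)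
  next
    fix x y assume "x \<in> vs.span GG" "y \<in> vs.span GG"
    then show "br x y \<in> vs.span GG" using br_span[OF vs.subspace_span br_GG] by blast
  qed
  then show ?thesis using cs unfolding chevalley_serre_def by auto
qed

lemma Ds_add: "a \<in> Ds \<Longrightarrow> b \<in> Ds \<Longrightarrow> a + b \<in> Ds"
  unfolding dset_def by (auto intro: Hc_add)
lemma Ds_0: "0 \<in> Ds" unfolding dset_def using Hc_0 by auto
lemma Ds_scd: "a \<in> Ds \<Longrightarrow> scd sc c a \<in> Ds"
  unfolding dset_def scd_def by (auto intro: Hc_sc)
lemma Ds_H: "h \<in> Hc \<Longrightarrow> (h, 0) \<in> Ds" and Ds_K: "h \<in> Hc \<Longrightarrow> (0, h) \<in> Ds"
  and Ds_X: "(x, 0) \<in> Ds"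
  unfolding dset_def using Hc_0 by auto

lemma brd_in: "a \<in> Ds \<Longrightarrow> b \<in> Ds \<Longrightarrow> brd a b \<in> Ds"
  and brd_add_l: "a \<in> Ds \<Longrightarrow> b \<in> Ds \<Longrightarrow> c \<in> Ds \<Longrightarrow> brd (a + b) c = brd a c + brd b c"
  and brd_add_r: "a \<in> Ds \<Longrightarrow> b \<in> Ds \<Longrightarrow> c \<in> Ds \<Longrightarrow> brd c (a + b) = brd c a + brd c b"
  using brd_bil unfolding bilinear_map_on_def by auto

lemma Bd_add_l: "a \<in> Ds \<Longrightarrow> b \<in> Ds \<Longrightarrow> c \<in> Ds \<Longrightarrow> Bd (a + b) c = Bd a c + Bd b c"
  and Bd_add_r: "a \<in> Ds \<Longrightarrow> b \<in> Ds \<Longrightarrow> c \<in> Ds \<Longrightarrow> Bd c (a + b) = Bd c a + Bd c b"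
  and Bd_scd_l: "a \<in> Ds \<Longrightarrow> b \<in> Ds \<Longrightarrow> Bd (scd sc k b) a = k * Bd b a"
  and Bd_scd_r: "a \<in> Ds \<Longrightarrow> b \<in> Ds \<Longrightarrow> Bd a (scd sc k b) = k * Bd a b"
  using Bd_bil unfolding bilinear_form_on_def by auto

lemma brd_0_l: "b \<in> Ds \<Longrightarrow> brd 0 b = 0"
  using brd_add_l[OF Ds_0 Ds_0, of b] by simp
lemma brd_0_r: "b \<in> Ds \<Longrightarrow> brd b 0 = 0"
  using brd_add_r[OF Ds_0 Ds_0, of b] by simp
lemma Bd_0_l: "b \<in> Ds \<Longrightarrow> Bd 0 b = 0"
  using Bd_add_l[OF Ds_0 Ds_0, of b] by simp
lemma Bd_0_r: "b \<in> Ds \<Longrightarrow> Bd b 0 = 0"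
  using Bd_add_r[OF Ds_0 Ds_0, of b] by simp

lemma brd_anti: assumes a: "a \<in> Ds" and b: "b \<in> Ds" shows "brd b a = - brd a b"
proof -
  have "brd (a+b) (a+b) = 0" using brd_alt Ds_add[OF a b] by auto
  hence "brd a a + brd b a + (brd a b + brd b b) = 0"
    using a b Ds_add[OF a b] by (simp add: brd_add_l brd_add_r)
  hence "brd b a + brd a b = 0" using brd_alt a b by simp
  thus ?thesis by (simp add: eq_neg_iff_add_eq_0)
qed

lemma rs_NN: "isr \<alpha> \<Longrightarrow> v \<in> rs \<alpha> \<Longrightarrow> v \<in> NN"
  unfolding nilp_def by (auto intro!: vs.span_base)

lemma half_double: "sc (1/2) (z + z) = z"
proof -
  have "sc (1/2) (z + z) = sc (1/2) z + sc (1/2) z" by (rule vs.scale_right_distrib)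
  also have "\<dots> = sc (1/2 + 1/2) z" by (rule vs.scale_left_distrib[symmetric])
  finally show ?thesis by simp
qed

lemma brdXX:
  assumes ab: "isr \<alpha>" "x \<in> rs \<alpha>" "isr \<beta>" "y \<in> rs \<beta>"
  shows "(\<not> (\<forall>h\<in>Hc. \<alpha> h + \<beta> h = 0) \<longrightarrow> brd (x, 0) (y, 0) = (br x y, 0) \<and> br x y \<in> NN)
       \<and> ((\<forall>h\<in>Hc. \<alpha> h + \<beta> h = 0) \<longrightarrow> brd (x, 0) (y, 0) = scd sc (1/2) ((br x y, 0) + (0, br x y)) \<and> br x y \<in> Hc)"
proof (intro conjI impI)
  assume "\<not> (\<forall>h\<in>Hc. \<alpha> h + \<beta> h = 0)"
  then obtain h where h: "h \<in> Hc" "\<alpha> h + \<beta> h \<noteq> 0" by auto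
  show "br x y \<in> NN" using rs_nilp[OF rs_br[OF ab(2) ab(4)] h] .
  show "brd (x, 0) (y, 0) = (br x y, 0)"
    using brd_xx ab h by (auto simp: scd_def half_double)
next
  assume c: "\<forall>h\<in>Hc. \<alpha> h + \<beta> h = 0"
  show "brd (x, 0) (y, 0) = scd sc (1/2) ((br x y, 0) + (0, br x y))"
    using brd_xx ab c by auto
  show "br x y \<in> Hc" using rr_cartan[OF ab c] .
qed

abbreviation "Ph \<equiv> PhiH n u sc B hh"
abbreviation "UU \<equiv> uu n u B hh"

lemma PhiH_in: "Ph h \<in> Hc"
  unfolding PhiH_def cartan_def by (intro vs.span_sum vs.span_scale vs.span_base) auto

lemma B_PhiH: "B z (Ph h) = UU h z"
  by (simp add: PhiH_def uu_def B_sum_r B_sc_r)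

lemma uu_skew: "UU a b = - UU b a"
proof -
  have "UU b a = (\<Sum>i<n. \<Sum>j<n. u i j * B b (hh i) * B a (hh j))" by (simp only: uu_def)
  also have "\<dots> = (\<Sum>j<n. \<Sum>i<n. u i j * B b (hh i) * B a (hh j))" by (rule sum.swap)
  also have "\<dots> = (\<Sum>j<n. \<Sum>i<n. - (u j i * B a (hh j) * B b (hh i)))"
  proof (rule sum.cong[OF refl], rule sum.cong[OF refl])
    fix i j assume "i \<in> {..<n}" "j \<in> {..<n}"
    then have "i < n" "j < n" by auto
    then have "u i j = - u j i" by (rule u_skew[rule_format])
    then show "u j i * B b (hh j) * B a (hh i) = - (u i j * B a (hh i) * B b (hh j))"
      by (simp add: algebra_simps)
  qed
  also have "\<dots> = - UU a b" by (simp only: uu_def sum_negf)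
  finally show ?thesis by simp
qed

lemma B_neg_r: "B x (- y) = - B x y" by (simp add: B_sym[of x] B_neg_l)

lemma B_z_h: assumes y: "y \<in> rs \<beta>" and h: "h \<in> Hc"
  shows "B (br x y) h = - \<beta> h * B x y"
proof -
  have "br h y = sc (\<beta> h) y" using y h unfolding rootspace_def by auto
  hence "br y h = - sc (\<beta> h) y" using br_anti[of h y] by (metis minus_minus)
  then show ?thesis by (simp add: B_inv B_neg_r B_sc_r)
qed

lemma uu_z_h: assumes y: "y \<in> rs \<beta>" and h: "h \<in> Hc"
  shows "UU (br x y) h = \<beta> (Ph h) * B x y"
proof -
  have "UU (br x y) h = - UU h (br x y)" by (rule uu_skew)
  also have "\<dots> = - B (br x y) (Ph h)" by (simp add: B_PhiH)
  also have "\<dots> = \<beta> (Ph h) * B x y" using B_z_h[OF y PhiH_in] by simp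
  finally show ?thesis .
qed

definition "TS = {(h, 0) | h. h \<in> Hc} \<union> {(0, k) | k. k \<in> Hc}"

definition toral_ok where "toral_ok t cf L \<longleftrightarrow>
   (\<forall>\<alpha> x. isr \<alpha> \<and> x \<in> rs \<alpha> \<longrightarrow> brd t (x, 0) = (sc (cf \<alpha>) x, 0))
 \<and> (\<forall>v\<in>NN. Bd t (v, 0) = 0 \<and> Bd (v, 0) t = 0)
 \<and> (\<forall>z\<in>Hc. Bd (z, 0) t + Bd (0, z) t = 2 * L z \<and> Bd t (z, 0) + Bd t (0, z) = 2 * L z)
 \<and> (\<forall>\<alpha> \<beta> x y. isr \<alpha> \<and> isr \<beta> \<and> x \<in> rs \<alpha> \<and> y \<in> rs \<beta> \<and> (\<forall>h\<in>Hc. \<alpha> h + \<beta> h = 0)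
       \<longrightarrow> cf \<alpha> = - cf \<beta> \<and> L (br x y) = - cf \<beta> * B x y)"

lemma toral_H: assumes h: "h \<in> Hc"
  shows "toral_ok (h, 0) (\<lambda>\<alpha>. - (\<alpha> (Ph h) - \<alpha> h)) (\<lambda>z. B z h + UU z h)"
  unfolding toral_ok_def
proof (intro conjI allI impI ballI)
  fix \<alpha> x assume "isr \<alpha> \<and> x \<in> rs \<alpha>"
  then show "brd (h, 0) (x, 0) = (sc (- (\<alpha> (Ph h) - \<alpha> h)) x, 0)" using brd_hx h by blast
next
  fix v assume "v \<in> NN"
  then show "Bd (h, 0) (v, 0) = 0" "Bd (v, 0) (h, 0) = 0" using Bd_hx h by auto
next
  fix z assume z: "z \<in> Hc"
  show "Bd (z, 0) (h, 0) + Bd (0, z) (h, 0) = 2 * (B z h + UU z h)"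
    using Bd_hh Bd_kh h z by (simp add: algebra_simps)
  show "Bd (h, 0) (z, 0) + Bd (h, 0) (0, z) = 2 * (B z h + UU z h)"
    using Bd_hh Bd_hk h z uu_skew[of h z] B_sym[of h z] by (simp add: algebra_simps)
next
  fix \<alpha> \<beta> x y assume a: "isr \<alpha> \<and> isr \<beta> \<and> x \<in> rs \<alpha> \<and> y \<in> rs \<beta> \<and> (\<forall>h\<in>Hc. \<alpha> h + \<beta> h = 0)"
  have "\<alpha> h + \<beta> h = 0" "\<alpha> (Ph h) + \<beta> (Ph h) = 0" using a h PhiH_in by auto
  then have e1: "\<alpha> h = - \<beta> h" "\<alpha> (Ph h) = - \<beta> (Ph h)"
    by (simp_all add: eq_neg_iff_add_eq_0)
  then show "- (\<alpha> (Ph h) - \<alpha> h) = - (- (\<beta> (Ph h) - \<beta> h))" by simp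
  show "B (br x y) h + UU (br x y) h = - (- (\<beta> (Ph h) - \<beta> h)) * B x y"
    using B_z_h[of y \<beta> h x] uu_z_h[of y \<beta> h x] a h by (simp add: algebra_simps)
qed

lemma toral_K: assumes h: "h \<in> Hc"
  shows "toral_ok (0, h) (\<lambda>\<alpha>. \<alpha> (Ph h) + \<alpha> h) (\<lambda>z. B z h - UU z h)"
  unfolding toral_ok_def
proof (intro conjI allI impI ballI)
  fix \<alpha> x assume "isr \<alpha> \<and> x \<in> rs \<alpha>"
  then show "brd (0, h) (x, 0) = (sc (\<alpha> (Ph h) + \<alpha> h) x, 0)" using brd_kx h by blast
next
  fix v assume "v \<in> NN"
  then show "Bd (0, h) (v, 0) = 0" "Bd (v, 0) (0, h) = 0" using Bd_kx h by auto
next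
  fix z assume z: "z \<in> Hc"
  show "Bd (z, 0) (0, h) + Bd (0, z) (0, h) = 2 * (B z h - UU z h)"
    using Bd_kk Bd_hk h z by (simp add: algebra_simps)
  show "Bd (0, h) (z, 0) + Bd (0, h) (0, z) = 2 * (B z h - UU z h)"
    using Bd_kk Bd_kh h z uu_skew[of h z] B_sym[of h z] by (simp add: algebra_simps)
next
  fix \<alpha> \<beta> x y assume a: "isr \<alpha> \<and> isr \<beta> \<and> x \<in> rs \<alpha> \<and> y \<in> rs \<beta> \<and> (\<forall>h\<in>Hc. \<alpha> h + \<beta> h = 0)"
  have "\<alpha> h + \<beta> h = 0" "\<alpha> (Ph h) + \<beta> (Ph h) = 0" using a h PhiH_in by auto
  then have e1: "\<alpha> h = - \<beta> h" "\<alpha> (Ph h) = - \<beta> (Ph h)"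
    by (simp_all add: eq_neg_iff_add_eq_0)
  then show "\<alpha> (Ph h) + \<alpha> h = - (\<beta> (Ph h) + \<beta> h)" by simp
  show "B (br x y) h - UU (br x y) h = - (\<beta> (Ph h) + \<beta> h) * B x y"
    using B_z_h[of y \<beta> h x] uu_z_h[of y \<beta> h x] a h by (simp add: algebra_simps)
qed

lemma TS_toral: "t \<in> TS \<Longrightarrow> \<exists>cf L. toral_ok t cf L"
  unfolding TS_def using toral_H toral_K by blast

lemma TS_Ds: "t \<in> TS \<Longrightarrow> t \<in> Ds" unfolding TS_def using Ds_H Ds_K by auto

lemma brd_TS: assumes t: "t \<in> TS" and t': "t' \<in> TS" shows "brd t t' = 0"
proof -
  have "brd (0, k) (h, 0) = 0" if "h \<in> Hc" "k \<in> Hc" for h k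
    using brd_anti[OF Ds_H Ds_K, of h k] brd_hk that by simp
  note kh = this
  from t obtain h where "t = (h, 0) \<and> h \<in> Hc \<or> t = (0, h) \<and> h \<in> Hc" unfolding TS_def by blast
  moreover from t' obtain k where "t' = (k, 0) \<and> k \<in> Hc \<or> t' = (0, k) \<and> k \<in> Hc" unfolding TS_def by blast
  ultimately show ?thesis
    apply (elim disjE conjE; hypsubst)
    subgoal by (rule brd_hh[rule_format])
    subgoal by (rule brd_hk[rule_format])
    subgoal by (rule kh)
    subgoal by (rule brd_kk[rule_format])
    done
qed

abbreviation "inv3 a b c \<equiv> Bd (brd a b) c = Bd a (brd b c)"

lemma toral_D:
  assumes "toral_ok t cf L"
  shows "\<And>\<alpha> x. isr \<alpha> \<Longrightarrow> x \<in> rs \<alpha> \<Longrightarrow> brd t (x, 0) = (sc (cf \<alpha>) x, 0)"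
    and "\<And>v. v \<in> NN \<Longrightarrow> Bd t (v, 0) = 0"
    and "\<And>v. v \<in> NN \<Longrightarrow> Bd (v, 0) t = 0"
    and "\<And>z. z \<in> Hc \<Longrightarrow> Bd (z, 0) t + Bd (0, z) t = 2 * L z"
    and "\<And>z. z \<in> Hc \<Longrightarrow> Bd t (z, 0) + Bd t (0, z) = 2 * L z"
    and "\<And>\<alpha> \<beta> x y. isr \<alpha> \<Longrightarrow> isr \<beta> \<Longrightarrow> x \<in> rs \<alpha> \<Longrightarrow> y \<in> rs \<beta> \<Longrightarrow> (\<forall>h\<in>Hc. \<alpha> h + \<beta> h = 0)
       \<Longrightarrow> cf \<alpha> = - cf \<beta>"
    and "\<And>\<alpha> \<beta> x y. isr \<alpha> \<Longrightarrow> isr \<beta> \<Longrightarrow> x \<in> rs \<alpha> \<Longrightarrow> y \<in> rs \<beta> \<Longrightarrow> (\<forall>h\<in>Hc. \<alpha> h + \<beta> h = 0)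
       \<Longrightarrow> L (br x y) = - cf \<beta> * B x y"
  using assms unfolding toral_ok_def by blast+

lemma brd_xt: assumes t: "t \<in> TS" and "toral_ok t cf L" "isr \<alpha>" "x \<in> rs \<alpha>"
  shows "brd (x, 0) t = (sc (- cf \<alpha>) x, 0)"
proof -
  have "brd (x, 0) t = - brd t (x, 0)" using brd_anti[OF TS_Ds[OF t] Ds_X] .
  then show ?thesis using toral_D(1)[OF assms(2-4)] by simp
qed

lemma Bd_XsX: assumes "isr \<alpha>" "x \<in> rs \<alpha>" "isr \<beta>" "y \<in> rs \<beta>"
  shows "Bd (sc c x, 0) (y, 0) = c * B x y" "Bd (x, 0) (sc c y, 0) = c * B x y"
  using assms Bd_xx rs_NN rs_sc by (auto simp: B_sc_l B_sc_r)

lemma Bd_XnsX: assumes "isr \<alpha>" "x \<in> rs \<alpha>" "isr \<beta>" "y \<in> rs \<beta>"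
  shows "Bd (- sc c x, 0) (y, 0) = - c * B x y" "Bd (x, 0) (- sc c y, 0) = - c * B x y"
  using Bd_XsX[OF assms, of "- c"] by simp_all

lemma inv_ttt: "t \<in> TS \<Longrightarrow> t' \<in> TS \<Longrightarrow> t'' \<in> TS \<Longrightarrow> inv3 t t' t''"
  using brd_TS TS_Ds Bd_0_l Bd_0_r by simp

lemma inv_1x:
  assumes t: "t \<in> TS" and t': "t' \<in> TS" and x: "isr \<alpha>" "x \<in> rs \<alpha>"
  shows "inv3 (x, 0) t t'" "inv3 t (x, 0) t'" "inv3 t t' (x, 0)"
proof -
  obtain cf L where o: "toral_ok t cf L" using TS_toral[OF t] by blast
  obtain cf' L' where o': "toral_ok t' cf' L'" using TS_toral[OF t'] by blast
  have N: "sc c x \<in> NN" for c using rs_NN[OF x(1) rs_sc[OF x(2)]] .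
  have N': "- sc c x \<in> NN" for c using N[of "- c"] by simp
  show "inv3 (x, 0) t t'"
    using brd_xt[OF t o x] toral_D(3)[OF o' N'] brd_TS[OF t t'] Bd_0_r Ds_X by simp
  show "inv3 t (x, 0) t'"
    using toral_D(1)[OF o x] toral_D(3)[OF o' N] brd_xt[OF t' o' x] toral_D(2)[OF o N'] by simp
  show "inv3 t t' (x, 0)"
    using brd_TS[OF t t'] Bd_0_l Ds_X toral_D(1)[OF o' x] toral_D(2)[OF o N] by simp
qed

lemma inv_2x:
  assumes t: "t \<in> TS" and x: "isr \<alpha>" "x \<in> rs \<alpha>" and y: "isr \<beta>" "y \<in> rs \<beta>"
  shows "inv3 (x, 0) (y, 0) t" "inv3 t (x, 0) (y, 0)" "inv3 (x, 0) t (y, 0)"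
proof -
  obtain cf L where o: "toral_ok t cf L" using TS_toral[OF t] by blast
  have tD: "t \<in> Ds" using TS_Ds[OF t] .
  have bxt: "brd (x, 0) t = (sc (- cf \<alpha>) x, 0)" by (rule brd_xt[OF t o x])
  have byt: "brd (y, 0) t = (sc (- cf \<beta>) y, 0)" by (rule brd_xt[OF t o y])
  have btx: "brd t (x, 0) = (sc (cf \<alpha>) x, 0)" by (rule toral_D(1)[OF o x])
  have bty: "brd t (y, 0) = (sc (cf \<beta>) y, 0)" by (rule toral_D(1)[OF o y])
  note XX = brdXX[OF x y]
  show "inv3 (x, 0) (y, 0) t"
  proof (cases "\<forall>h\<in>Hc. \<alpha> h + \<beta> h = 0")
    case False
    then obtain h where h: "h \<in> Hc" "\<alpha> h + \<beta> h \<noteq> 0" by auto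
    have "B x y = 0" by (rule B_rr[OF x(2) y(2) h])
    then show ?thesis using XX False toral_D(3)[OF o] byt Bd_XnsX(2)[OF x y] by simp
  next
    case True
    have z: "br x y \<in> Hc" and e: "brd (x, 0) (y, 0) = scd sc (1/2) ((br x y, 0) + (0, br x y))"
      using XX True by auto
    have "Bd (brd (x, 0) (y, 0)) t = 1/2 * (Bd (br x y, 0) t + Bd (0, br x y) t)"
      unfolding e using Bd_scd_l[OF tD Ds_add[OF Ds_H[OF z] Ds_K[OF z]]]
        Bd_add_l[OF Ds_H[OF z] Ds_K[OF z] tD] by simp
    also have "\<dots> = - cf \<beta> * B x y" using toral_D(4)[OF o z] toral_D(7)[OF o x(1) y(1) x(2) y(2) True] by simp
    finally show ?thesis using byt Bd_XsX[OF x y] Bd_XnsX[OF x y] by simp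
  qed
  show "inv3 t (x, 0) (y, 0)"
  proof (cases "\<forall>h\<in>Hc. \<alpha> h + \<beta> h = 0")
    case False
    then obtain h where h: "h \<in> Hc" "\<alpha> h + \<beta> h \<noteq> 0" by auto
    have "B x y = 0" by (rule B_rr[OF x(2) y(2) h])
    then show ?thesis using XX False toral_D(2)[OF o] btx Bd_XsX[OF x y] Bd_XnsX[OF x y] by simp
  next
    case True
    have z: "br x y \<in> Hc" and e: "brd (x, 0) (y, 0) = scd sc (1/2) ((br x y, 0) + (0, br x y))"
      using XX True by auto
    have "Bd t (brd (x, 0) (y, 0)) = 1/2 * (Bd t (br x y, 0) + Bd t (0, br x y))"
      unfolding e using Bd_scd_r[OF tD Ds_add[OF Ds_H[OF z] Ds_K[OF z]]]
        Bd_add_r[OF Ds_H[OF z] Ds_K[OF z] tD] by simp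
    also have "\<dots> = - cf \<beta> * B x y" using toral_D(5)[OF o z] toral_D(7)[OF o x(1) y(1) x(2) y(2) True] by simp
    also have "\<dots> = cf \<alpha> * B x y" using toral_D(6)[OF o x(1) y(1) x(2) y(2) True] by simp
    finally show ?thesis using btx Bd_XsX[OF x y] Bd_XnsX[OF x y] by simp
  qed
  show "inv3 (x, 0) t (y, 0)"
  proof (cases "\<forall>h\<in>Hc. \<alpha> h + \<beta> h = 0")
    case False
    then obtain h where h: "h \<in> Hc" "\<alpha> h + \<beta> h \<noteq> 0" by auto
    have "B x y = 0" by (rule B_rr[OF x(2) y(2) h])
    then show ?thesis using bxt bty Bd_XsX[OF x y] Bd_XnsX[OF x y] by simp
  next
    case True
    then show ?thesis using bxt bty Bd_XsX[OF x y] Bd_XnsX[OF x y] toral_D(6)[OF o x(1) y(1) x(2) y(2) True] by simp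
  qed
qed

lemma Bd_brdXX: assumes x: "isr \<alpha>" "x \<in> rs \<alpha>" and y: "isr \<beta>" "y \<in> rs \<beta>" and w: "isr \<gamma>" "w \<in> rs \<gamma>"
  shows "Bd (brd (x, 0) (y, 0)) (w, 0) = B (br x y) w" "Bd (w, 0) (brd (x, 0) (y, 0)) = B w (br x y)"
proof -
  note XX = brdXX[OF x y]
  have wN: "w \<in> NN" by (rule rs_NN[OF w])
  have "Bd (brd (x, 0) (y, 0)) (w, 0) = B (br x y) w \<and> Bd (w, 0) (brd (x, 0) (y, 0)) = B w (br x y)"
  proof (cases "\<forall>h\<in>Hc. \<alpha> h + \<beta> h = 0")
    case False
    then show ?thesis using XX Bd_xx wN by auto
  next
    case True
    have z: "br x y \<in> Hc" and e: "brd (x, 0) (y, 0) = scd sc (1/2) ((br x y, 0) + (0, br x y))"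
      using XX True by auto
    obtain h where h: "h \<in> Hc" "\<gamma> h \<noteq> 0" using w unfolding is_root_def by auto
    have B0: "B (br x y) w = 0" by (rule B_hr[OF z w(2) h])
    have "Bd (brd (x, 0) (y, 0)) (w, 0) = 1/2 * (Bd (br x y, 0) (w, 0) + Bd (0, br x y) (w, 0))"
      unfolding e using Bd_scd_l[OF Ds_X Ds_add[OF Ds_H[OF z] Ds_K[OF z]]]
        Bd_add_l[OF Ds_H[OF z] Ds_K[OF z] Ds_X] by simp
    also have "\<dots> = 0" using Bd_hx Bd_kx z wN by simp
    finally have 1: "Bd (brd (x, 0) (y, 0)) (w, 0) = B (br x y) w" using B0 by simp
    have "Bd (w, 0) (brd (x, 0) (y, 0)) = 1/2 * (Bd (w, 0) (br x y, 0) + Bd (w, 0) (0, br x y))"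
      unfolding e using Bd_scd_r[OF Ds_X Ds_add[OF Ds_H[OF z] Ds_K[OF z]]]
        Bd_add_r[OF Ds_H[OF z] Ds_K[OF z] Ds_X] by simp
    also have "\<dots> = 0" using Bd_hx Bd_kx z wN by simp
    finally have 2: "Bd (w, 0) (brd (x, 0) (y, 0)) = B w (br x y)" using B0 B_sym by simp
    show ?thesis using 1 2 by simp
  qed
  then show "Bd (brd (x, 0) (y, 0)) (w, 0) = B (br x y) w" "Bd (w, 0) (brd (x, 0) (y, 0)) = B w (br x y)" by auto
qed

lemma inv_3x: assumes x: "isr \<alpha>" "x \<in> rs \<alpha>" and y: "isr \<beta>" "y \<in> rs \<beta>" and w: "isr \<gamma>" "w \<in> rs \<gamma>"
  shows "inv3 (x, 0) (y, 0) (w, 0)"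
  using Bd_brdXX(1)[OF x y w] Bd_brdXX(2)[OF y w x] B_inv by simp

definition "TT = TS \<union> {(x, 0) | x. x \<in> RR}"

lemma TT_cases:
  assumes "a \<in> TT"
  obtains (T) "a \<in> TS" | (X) x \<alpha> where "a = (x, 0)" "isr \<alpha>" "x \<in> rs \<alpha>"
  using assms unfolding TT_def RR_def by blast

lemma TT_Ds: "a \<in> TT \<Longrightarrow> a \<in> Ds"
  unfolding TT_def using TS_Ds[of a] Ds_X by blast

lemma gen_inv: assumes a: "a \<in> TT" and b: "b \<in> TT" and c: "c \<in> TT" shows "inv3 a b c"
  using a
proof (cases rule: TT_cases)
  case aT: T
  show ?thesis using b
  proof (cases rule: TT_cases)
    case bT: T
    show ?thesis using c
    proof (cases rule: TT_cases)
      case T then show ?thesis using inv_ttt aT bT by blast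
    next
      case (X x \<alpha>) then show ?thesis using inv_1x(3)[OF aT bT] by blast
    qed
  next
    case bX: (X x \<alpha>)
    show ?thesis using c
    proof (cases rule: TT_cases)
      case T then show ?thesis using inv_1x(2)[OF aT T] bX by blast
    next
      case (X y \<beta>) then show ?thesis using inv_2x(2)[OF aT] bX by blast
    qed
  qed
next
  case aX: (X x \<alpha>)
  show ?thesis using b
  proof (cases rule: TT_cases)
    case bT: T
    show ?thesis using c
    proof (cases rule: TT_cases)
      case T then show ?thesis using inv_1x(1)[OF bT T] aX by blast
    next
      case (X y \<beta>) then show ?thesis using inv_2x(3)[OF bT] aX by blast
    qed
  next
    case bX: (X y \<beta>)
    show ?thesis using c
    proof (cases rule: TT_cases)
      case T then show ?thesis using inv_2x(1)[OF T] aX bX by blast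
    next
      case (X w \<gamma>) then show ?thesis using inv_3x aX bX by blast
    qed
  qed
qed

lemma sym_TS: assumes a: "a \<in> TS" and b: "b \<in> TS" shows "Bd a b = Bd b a"
proof -
  from a obtain h where "a = (h, 0) \<and> h \<in> Hc \<or> a = (0, h) \<and> h \<in> Hc" unfolding TS_def by blast
  moreover from b obtain k where "b = (k, 0) \<and> k \<in> Hc \<or> b = (0, k) \<and> k \<in> Hc" unfolding TS_def by blast
  ultimately show ?thesis
    apply (elim disjE conjE; hypsubst)
    subgoal using Bd_hh B_sym by simp
    subgoal using Bd_hk Bd_kh uu_skew[of k h] by simp
    subgoal using Bd_hk Bd_kh uu_skew[of h k] by simp
    subgoal using Bd_kk B_sym by simp
    done
qed

lemma gen_sym: assumes a: "a \<in> TT" and b: "b \<in> TT" shows "Bd a b = Bd b a"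
  using a
proof (cases rule: TT_cases)
  case aT: T
  show ?thesis using b
  proof (cases rule: TT_cases)
    case T then show ?thesis using sym_TS aT by blast
  next
    case (X x \<alpha>)
    obtain cf L where o: "toral_ok a cf L" using TS_toral[OF aT] by blast
    show ?thesis using X toral_D(2,3)[OF o rs_NN[OF X(2,3)]] by simp
  qed
next
  case aX: (X x \<alpha>)
  show ?thesis using b
  proof (cases rule: TT_cases)
    case T
    obtain cf L where o: "toral_ok b cf L" using TS_toral[OF T] by blast
    show ?thesis using aX toral_D(2,3)[OF o rs_NN[OF aX(2,3)]] by simp
  next
    case (X y \<beta>) then show ?thesis using aX Bd_xx rs_NN B_sym by simp
  qed
qed

inductive_set AC where
  AC0: "0 \<in> AC" | ACT: "t \<in> TT \<Longrightarrow> t \<in> AC" | ACadd: "a \<in> AC \<Longrightarrow> b \<in> AC \<Longrightarrow> a + b \<in> AC"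

lemma AC_Ds: "a \<in> AC \<Longrightarrow> a \<in> Ds"
  by (induction rule: AC.induct) (auto intro: Ds_0 TT_Ds Ds_add)

lemma X_AC: "(x, 0) \<in> AC"
proof -
  have "x \<in> vs.span GG" using spanGG by simp
  then show ?thesis
  proof (induction rule: vs.span_induct_alt)
    case base then show ?case using AC0 by (simp add: zero_prod_def)
  next
    case (step c g y)
    have "sc c g \<in> GG" using GG_sc step(1) .
    then have "(sc c g, 0) \<in> TT" unfolding TT_def TS_def GG_def by auto
    then have "(sc c g, 0) + (y, 0) \<in> AC" using ACT ACadd step(2) by blast
    then show ?case by simp
  qed
qed

lemma Ds_AC: assumes p: "p \<in> Ds" shows "p \<in> AC"
proof -
  obtain X K where pk: "p = (X, K)" by (cases p)
  then have K: "K \<in> Hc" using p unfolding dset_def by simp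
  then have "(0, K) \<in> TT" unfolding TT_def TS_def by auto
  then have "(X, 0) + (0, K) \<in> AC" using ACT ACadd X_AC by blast
  then show ?thesis using pk by simp
qed

lemma sym_e1: "a \<in> AC \<Longrightarrow> b \<in> TT \<Longrightarrow> Bd a b = Bd b a"
proof (induction rule: AC.induct)
  case AC0 then show ?case using Bd_0_l Bd_0_r TT_Ds by simp
next
  case (ACT t) then show ?case using gen_sym by blast
next
  case (ACadd a1 a2) then show ?case using Bd_add_l Bd_add_r AC_Ds TT_Ds by simp
qed

lemma sym_e2: "b \<in> AC \<Longrightarrow> a \<in> AC \<Longrightarrow> Bd a b = Bd b a"
proof (induction rule: AC.induct)
  case AC0 then show ?case using Bd_0_l Bd_0_r AC_Ds by simp
next
  case (ACT t) then show ?case using sym_e1 by blast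
next
  case (ACadd b1 b2) then show ?case using Bd_add_l Bd_add_r AC_Ds by simp
qed

lemma inv_e1: "a \<in> AC \<Longrightarrow> b \<in> TT \<Longrightarrow> c \<in> TT \<Longrightarrow> inv3 a b c"
proof (induction rule: AC.induct)
  case AC0 then show ?case using Bd_0_l Bd_0_r brd_0_l brd_in TT_Ds by simp
next
  case (ACT t) then show ?case using gen_inv by blast
next
  case (ACadd a1 a2)
  then have D: "a1 \<in> Ds" "a2 \<in> Ds" "b \<in> Ds" "c \<in> Ds" using AC_Ds TT_Ds by auto
  then show ?case using ACadd brd_add_l[OF D(1,2,3)] Bd_add_l[OF brd_in[OF D(1,3)] brd_in[OF D(2,3)] D(4)]
      Bd_add_l[OF D(1,2) brd_in[OF D(3,4)]] by simp
qed

lemma inv_e2: "b \<in> AC \<Longrightarrow> a \<in> AC \<Longrightarrow> c \<in> TT \<Longrightarrow> inv3 a b c"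
proof (induction rule: AC.induct)
  case AC0 then show ?case using Bd_0_l Bd_0_r brd_0_l brd_0_r AC_Ds TT_Ds by simp
next
  case (ACT t) then show ?case using inv_e1 by blast
next
  case (ACadd b1 b2)
  then have D: "b1 \<in> Ds" "b2 \<in> Ds" "a \<in> Ds" "c \<in> Ds" using AC_Ds TT_Ds by auto
  then show ?case using ACadd brd_add_r[OF D(1,2,3)] brd_add_l[OF D(1,2,4)]
      Bd_add_l[OF brd_in[OF D(3,1)] brd_in[OF D(3,2)] D(4)]
      Bd_add_r[OF brd_in[OF D(1,4)] brd_in[OF D(2,4)] D(3)] by simp
qed

lemma inv_e3: "c \<in> AC \<Longrightarrow> a \<in> AC \<Longrightarrow> b \<in> AC \<Longrightarrow> inv3 a b c"
proof (induction rule: AC.induct)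
  case AC0 then show ?case using Bd_0_l Bd_0_r brd_0_r brd_in AC_Ds by simp
next
  case (ACT t) then show ?case using inv_e2 by blast
next
  case (ACadd c1 c2)
  then have D: "c1 \<in> Ds" "c2 \<in> Ds" "a \<in> Ds" "b \<in> Ds" using AC_Ds by auto
  then show ?case using ACadd brd_add_r[OF D(1,2,4)]
      Bd_add_r[OF D(1,2) brd_in[OF D(3,4)]]
      Bd_add_r[OF brd_in[OF D(4,1)] brd_in[OF D(4,2)] D(3)] by simp
qed

theorem final:
  "(\<forall>a\<in>Ds. \<forall>b\<in>Ds. Bd a b = Bd b a)
    \<and> (\<forall>a\<in>Ds. \<forall>b\<in>Ds. \<forall>c\<in>Ds. Bd (brd a b) c = Bd a (brd b c))"
  using sym_e2 inv_e3 Ds_AC by blast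

end

theorem mainTheorem2:
  fixes n :: nat and A :: "nat \<Rightarrow> nat \<Rightarrow> int" and d :: "nat \<Rightarrow> nat"
    and u :: "nat \<Rightarrow> nat \<Rightarrow> complex"
    and sc :: "complex \<Rightarrow> 'g \<Rightarrow> 'g::ab_group_add" and br :: "'g \<Rightarrow> 'g \<Rightarrow> 'g"
    and hh ep em :: "nat \<Rightarrow> 'g" and B :: "'g \<Rightarrow> 'g \<Rightarrow> complex"
    and brd :: "'g \<times> 'g \<Rightarrow> 'g \<times> 'g \<Rightarrow> 'g \<times> 'g"
    and Bd :: "'g \<times> 'g \<Rightarrow> 'g \<times> 'g \<Rightarrow> complex"
  assumes C: "gcm n A" "indecomposable n A" "symmetrizer_pd n A d"
    and u_skew: "\<forall>i<n. \<forall>j<n. u i j = - u j i"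
    and g: "lie_algebra sc br" "chevalley_serre n A sc br hh ep em"
    and B: "invariant_form n A d sc br hh ep em B"
    and brd_bil: "bilinear_map_on sc (dset n sc hh) brd"
    and brd_alt: "\<forall>a\<in>dset n sc hh. brd a a = 0"
    and brd_hh: "\<forall>H\<in>cartan n sc hh. \<forall>H'\<in>cartan n sc hh. brd (H, 0) (H', 0) = 0"
    and brd_hk: "\<forall>H\<in>cartan n sc hh. \<forall>H'\<in>cartan n sc hh. brd (H, 0) (0, H') = 0"
    and brd_kk: "\<forall>H\<in>cartan n sc hh. \<forall>H'\<in>cartan n sc hh. brd (0, H) (0, H') = 0"
    and brd_hx: "\<forall>H\<in>cartan n sc hh. \<forall>\<alpha> x. is_root n sc br hh \<alpha> \<and> x \<in> rootspace n sc br hh \<alpha> \<longrightarrow>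
        brd (H, 0) (x, 0) = (sc (- (\<alpha> (PhiH n u sc B hh H) - \<alpha> H)) x, 0)"
    and brd_kx: "\<forall>H\<in>cartan n sc hh. \<forall>\<alpha> x. is_root n sc br hh \<alpha> \<and> x \<in> rootspace n sc br hh \<alpha> \<longrightarrow>
        brd (0, H) (x, 0) = (sc (\<alpha> (PhiH n u sc B hh H) + \<alpha> H) x, 0)"
    and brd_xx: "\<forall>\<alpha> \<beta> x y. is_root n sc br hh \<alpha> \<and> x \<in> rootspace n sc br hh \<alpha>
        \<and> is_root n sc br hh \<beta> \<and> y \<in> rootspace n sc br hh \<beta> \<longrightarrow>
        brd (x, 0) (y, 0) = scd sc (1/2) ((br x y, 0) +
          (if (\<forall>h\<in>cartan n sc hh. \<alpha> h + \<beta> h = 0) then (0, br x y) else (br x y, 0)))"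
    and Bd_bil: "bilinear_form_on sc (dset n sc hh) Bd"
    and Bd_hh: "\<forall>H\<in>cartan n sc hh. \<forall>H'\<in>cartan n sc hh. Bd (H, 0) (H', 0) = 2 * B H H'"
    and Bd_hx: "\<forall>H\<in>cartan n sc hh. \<forall>x\<in>nilp n sc br hh. Bd (H, 0) (x, 0) = 0 \<and> Bd (x, 0) (H, 0) = 0"
    and Bd_xx: "\<forall>x\<in>nilp n sc br hh. \<forall>x'\<in>nilp n sc br hh. Bd (x, 0) (x', 0) = B x x'"
    and Bd_hk: "\<forall>H\<in>cartan n sc hh. \<forall>H'\<in>cartan n sc hh. Bd (H, 0) (0, H') = - 2 * uu n u B hh H H'"
    and Bd_kh: "\<forall>H\<in>cartan n sc hh. \<forall>H'\<in>cartan n sc hh. Bd (0, H') (H, 0) = 2 * uu n u B hh H' H"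
    and Bd_kx: "\<forall>K\<in>cartan n sc hh. \<forall>x\<in>nilp n sc br hh. Bd (0, K) (x, 0) = 0 \<and> Bd (x, 0) (0, K) = 0"
    and Bd_kk: "\<forall>K\<in>cartan n sc hh. \<forall>K'\<in>cartan n sc hh. Bd (0, K) (0, K') = 2 * B K K'"
  shows "(\<forall>a\<in>dset n sc hh. \<forall>b\<in>dset n sc hh. Bd a b = Bd b a)
    \<and> (\<forall>a\<in>dset n sc hh. \<forall>b\<in>dset n sc hh. \<forall>c\<in>dset n sc hh. Bd (brd a b) c = Bd a (brd b c))"
  proof -
  interpret S2 n A d u sc br hh ep em B brd Bd
    unfolding S2_def S_def S2_axioms_def by (intro conjI) (fact assms)+
  show ?thesis by (rule final)
qed

end
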